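(* Let $r\ge1$ and let $\lambda=(\lambda_1,\dots,\lambda_{r+1})\in\mathbb{Z}^{r+1}$ be such that $\lambda+\rho$ is a partition. For $m\in\mathrm{Lu}(\lambda+\rho)$ define $f(m)=(a_{i,j})_{1\le i<j\le r+1}$ recursively by $a_{i,r+2}=(\lambda+\rho)_i=\lambda_i+r+1-i$ and $a_{i,j}=a_{i,j+1}-m_{i,j}$. Then $f$ is a bijection $\mathrm{Lu}(\lambda+\rho)\to\mathrm{GT}(\lambda+\rho)$, with inverse $T=(a_{i,j})\mapsto(m_{i,j})$, $m_{i,j}=a_{i,j+1}-a_{i,j}$, and it is weight-preserving: $z^{f(m)}=z^m$.
   Context: Positive roots of $\mathrm{GL}_{r+1}$ are indexed by pairs $(i,j)$ with $1\le i<j\le r+1$; $N=r(r+1)/2$; $\mathbb{N}=\mathbb{Z}_{\ge0}$; $\rho=(r,r-1,\dots,1,0)$. For $\lambda\in\mathbb{Z}^{r+1}$ put $\Lambda_i=\lambda_i-\lambda_{i+1}$. For $m=(m_{i,j})_{1\le i<j\le r+1}\in\mathbb{N}^N$ define \[ s_{i,j}=\Lambda_i+\sum_{k=j}^{r}m_{i+1,k+1}-\sum_{k=j}^{r+1}m_{i,k}. \] The set of Lusztig data $\mathrm{Lu}(\lambda+\rho)$ is the set of $m\in\mathbb{N}^N$ with $s_{i,j}\ge-1$ for all $1\le i<j\le r+1$. For a partition $\mu=(\mu_1\ge\dots\ge\mu_{r+1}\ge0)$, $\mathrm{GT}(\mu)$ (Gelfand–Tsetlin patterns with top row $\mu$)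 is the set of $(a_{i,j})_{1\le i<j\le r+1}\in\mathbb{N}^N$ such that $a_{i,j+1}\ge a_{i,j}\ge a_{i+1,j+1}$ for all $1\le i<j\le r+1$, where $a_{i,r+2}:=\mu_i$. For formal variables $z_1,\dots,z_{r+1}$ the weights are $z^m=\prod_{i<j}(z_i/z_j)^{m_{i,j}}$ and $z^T=\prod_{i<j}(z_i/z_j)^{a_{i,j+1}-a_{i,j}}$ for $T=(a_{i,j})$. *)

theory Defs
  imports Complex_Main
begin

definition PosRoots :: "nat \<Rightarrow> (nat \<times> nat) set" where
  "PosRoots r = {(i,j). 1 \<le> i \<and> i < j \<and> j \<le> r + 1}"

definition lamrho :: "nat \<Rightarrow> (nat \<Rightarrow> int) \<Rightarrow> nat \<Rightarrow> int" where
  "lamrho r lam i = lam i + int r + 1 - int i"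

definition is_partition :: "nat \<Rightarrow> (nat \<Rightarrow> int) \<Rightarrow> bool" where
  "is_partition r mu \<longleftrightarrow> (\<forall>i. 1 \<le> i \<and> i \<le> r \<longrightarrow> mu (i+1) \<le> mu i) \<and> 0 \<le> mu (r+1)"

(* elements of N^N: functions on PosRoots r, nonnegative, extended by 0 outside *)
definition NN :: "nat \<Rightarrow> ((nat \<times> nat) \<Rightarrow> int) set" where
  "NN r = {m. (\<forall>p\<in>PosRoots r. 0 \<le> m p) \<and> (\<forall>p. p \<notin> PosRoots r \<longrightarrow> m p = 0)}"

definition Lam :: "(nat \<Rightarrow> int) \<Rightarrow> nat \<Rightarrow> int" where
  "Lam lam i = lam i - lam (i+1)"

definition s_ij :: "nat \<Rightarrow> (nat \<Rightarrow> int) \<Rightarrow> ((nat \<times> nat) \<Rightarrow> int) \<Rightarrow> nat \<Rightarrow> nat \<Rightarrow> int" where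
  "s_ij r lam m i j = Lam lam i + (\<Sum>k\<in>{j..r}. m (i+1, k+1)) - (\<Sum>k\<in>{j..r+1}. m (i, k))"

definition Lu :: "nat \<Rightarrow> (nat \<Rightarrow> int) \<Rightarrow> ((nat \<times> nat) \<Rightarrow> int) set" where
  "Lu r lam = {m \<in> NN r. \<forall>(i,j)\<in>PosRoots r. s_ij r lam m i j \<ge> -1}"

definition extGT :: "nat \<Rightarrow> (nat \<Rightarrow> int) \<Rightarrow> ((nat \<times> nat) \<Rightarrow> int) \<Rightarrow> nat \<Rightarrow> nat \<Rightarrow> int" where
  "extGT r mu a i j = (if j = r + 2 then mu i else a (i, j))"

definition GT :: "nat \<Rightarrow> (nat \<Rightarrow> int) \<Rightarrow> ((nat \<times> nat) \<Rightarrow> int) set" where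
  "GT r mu = {a \<in> NN r. \<forall>(i,j)\<in>PosRoots r.
      extGT r mu a i (j+1) \<ge> a (i,j) \<and> a (i,j) \<ge> extGT r mu a (i+1) (j+1)}"

(* f(m): a_{i,r+2} = mu_i, a_{i,j} = a_{i,j+1} - m_{i,j}; unrolled recursion:
   a_{i,j} = mu_i - sum_{k=j}^{r+1} m_{i,k} *)
definition fLuGT :: "nat \<Rightarrow> (nat \<Rightarrow> int) \<Rightarrow> ((nat \<times> nat) \<Rightarrow> int) \<Rightarrow> (nat \<times> nat) \<Rightarrow> int" where
  "fLuGT r lam m = (\<lambda>(i,j). if (i,j) \<in> PosRoots r
       then lamrho r lam i - (\<Sum>k\<in>{j..r+1}. m (i,k)) else 0)"

definition gGTLu :: "nat \<Rightarrow> (nat \<Rightarrow> int) \<Rightarrow> ((nat \<times> nat) \<Rightarrow> int) \<Rightarrow> (nat \<times> nat) \<Rightarrow> int" where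
  "gGTLu r lam a = (\<lambda>(i,j). if (i,j) \<in> PosRoots r
       then extGT r (lamrho r lam) a i (j+1) - a (i,j) else 0)"

(* weights, evaluated at z_1,...,z_{r+1} (nonzero elements of a field) *)
definition wtLu :: "nat \<Rightarrow> ((nat \<times> nat) \<Rightarrow> int) \<Rightarrow> (nat \<Rightarrow> 'a::field) \<Rightarrow> 'a" where
  "wtLu r m z = (\<Prod>(i,j)\<in>PosRoots r. (z i / z j) powi m (i,j))"

definition wtGT :: "nat \<Rightarrow> (nat \<Rightarrow> int) \<Rightarrow> ((nat \<times> nat) \<Rightarrow> int) \<Rightarrow> (nat \<Rightarrow> 'a::field) \<Rightarrow> 'a" where
  "wtGT r mu a z = (\<Prod>(i,j)\<in>PosRoots r. (z i / z j) powi (extGT r mu a i (j+1) - a (i,j)))"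

end

theory Submission
  imports Defs
begin

lemma f_eq: "(i,j) \<in> PosRoots r \<Longrightarrow> fLuGT r lam m (i,j) = lamrho r lam i - (\<Sum>k\<in>{j..r+1}. m(i,k))"
  by (simp add: fLuGT_def)

lemma g_f: assumes "(i,j)\<in>PosRoots r"
  shows "gGTLu r lam (fLuGT r lam m) (i,j) = m(i,j)"
proof (cases "j = r+1")
  case True
  then show ?thesis using assms by (simp add: gGTLu_def extGT_def f_eq)
next
  case False
  then have p: "(i,j+1) \<in> PosRoots r" "j \<le> r" using assms by (auto simp: PosRoots_def)
  have "(\<Sum>k\<in>{j..r+1}. m(i,k)) = m(i,j) + (\<Sum>k\<in>{Suc j..r+1}. m(i,k))"
    using p by (subst sum.atLeast_Suc_atMost) auto
  then show ?thesis using assms p False by (simp add: gGTLu_def extGT_def f_eq)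
qed

lemma f_diff: assumes "(i,j)\<in>PosRoots r"
  shows "fLuGT r lam m (i,j) - extGT r (lamrho r lam) (fLuGT r lam m) (i+1) (j+1) = s_ij r lam m i j + 1"
proof (cases "j = r+1")
  case True
  then show ?thesis using assms
    by (simp add: extGT_def f_eq s_ij_def lamrho_def Lam_def)
next
  case False
  then have p: "(i+1,j+1) \<in> PosRoots r" "j \<le> r" using assms by (auto simp: PosRoots_def)
  have "(\<Sum>k\<in>{Suc j..Suc r}. m(i+1,k)) = (\<Sum>k\<in>{j..r}. m(i+1,Suc k))"
    by (rule sum.shift_bounds_cl_Suc_ivl)
  then show ?thesis using assms p False
    by (simp add: extGT_def f_eq s_ij_def lamrho_def Lam_def)
qed

lemma tele: assumes "1 \<le> i" "i < j" "j \<le> r+1"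
  shows "(\<Sum>k\<in>{j..r+1}. extGT r mu T i (k+1) - T(i,k)) = mu i - T(i,j)"
  using assms(3)
proof (induction j rule: inc_induct)
  case base
  then show ?case by (simp add: extGT_def)
next
  case (step n)
  have "(\<Sum>k\<in>{n..r+1}. extGT r mu T i (k+1) - T(i,k)) =
     (extGT r mu T i (n+1) - T(i,n)) + (\<Sum>k\<in>{Suc n..r+1}. extGT r mu T i (k+1) - T(i,k))"
    using step by (simp add: sum.atLeast_Suc_atMost)
  then show ?case using step by (simp add: extGT_def)
qed

lemma f_g: assumes "T \<in> NN r" shows "fLuGT r lam (gGTLu r lam T) = T"
proof
  fix p show "fLuGT r lam (gGTLu r lam T) p = T p"
  proof (cases "p \<in> PosRoots r")
    case False
    then show ?thesis using assms by (cases p) (auto simp: fLuGT_def NN_def)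
  next
    case True
    obtain i j where pij: "p = (i,j)" by (cases p)
    have b: "1 \<le> i" "i < j" "j \<le> r+1" using True pij by (auto simp: PosRoots_def)
    have "(\<Sum>k\<in>{j..r+1}. gGTLu r lam T (i,k)) = (\<Sum>k\<in>{j..r+1}. extGT r (lamrho r lam) T i (k+1) - T(i,k))"
      using b by (intro sum.cong) (auto simp: gGTLu_def PosRoots_def)
    also have "\<dots> = lamrho r lam i - T(i,j)" using tele b by blast
    finally show ?thesis using True pij by (simp add: f_eq)
  qed
qed

lemma mu_nonneg: assumes "is_partition r mu" "1 \<le> k" "k \<le> r+1" shows "mu k \<ge> 0"
  using assms(3)
proof (induction k rule: inc_induct)
  case base then show ?case using assms(1) by (simp add: is_partition_def)
next
  case (step n)
  then have "mu (n+1) \<le> mu n" using assms(1,2) by (simp add: is_partition_def)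
  then show ?case using step by simp
qed

lemma a_nonneg:
  assumes h: "\<forall>(i,j)\<in>PosRoots r. a(i,j) \<ge> extGT r mu a (i+1) (j+1)"
    and P: "is_partition r mu"
  shows "(i,j)\<in>PosRoots r \<Longrightarrow> a(i,j) \<ge> 0"
proof -
  assume "(i,j)\<in>PosRoots r"
  then have b: "1 \<le> i" "i < j" "j \<le> r+1" by (auto simp: PosRoots_def)
  have "\<forall>i. 1 \<le> i \<and> i < j \<longrightarrow> a(i,j) \<ge> 0"
    using b(3)
  proof (induction j rule: inc_induct)
    case base
    show ?case
    proof (intro allI impI)
      fix i assume "1 \<le> i \<and> i < r+1"
      then have pr: "(i,r+1) \<in> PosRoots r" by (auto simp: PosRoots_def)
      have "extGT r mu a (i+1) (r+1+1) \<le> a(i,r+1)" using h pr by blast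
      then have "a(i,r+1) \<ge> mu (i+1)" by (simp add: extGT_def)
      moreover have "mu (i+1) \<ge> 0"
        using mu_nonneg[OF P, of "i+1"] \<open>1 \<le> i \<and> i < r+1\<close> by simp
      ultimately show "a(i,r+1) \<ge> 0" by simp
    qed
  next
    case (step n)
    show ?case
    proof (intro allI impI)
      fix i assume i: "1 \<le> i \<and> i < n"
      then have pr: "(i,n) \<in> PosRoots r" using step by (auto simp: PosRoots_def)
      have "extGT r mu a (i+1) (n+1) \<le> a(i,n)" using h pr by blast
      then have "a(i,n) \<ge> a(i+1,n+1)" using step by (simp add: extGT_def)
      moreover have "a(i+1,n+1) \<ge> 0" using step i by auto
      ultimately show "a(i,n) \<ge> 0" by simp
    qed
  qed
  then show "a(i,j) \<ge> 0" using b by blast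
qed

theorem mainTheorem5:
  fixes r :: nat and lam :: "nat \<Rightarrow> int"
  assumes "r \<ge> 1"
    and "is_partition r (lamrho r lam)"
  shows "bij_betw (fLuGT r lam) (Lu r lam) (GT r (lamrho r lam))
    \<and> (\<forall>m\<in>Lu r lam. gGTLu r lam (fLuGT r lam m) = m)
    \<and> (\<forall>T\<in>GT r (lamrho r lam). fLuGT r lam (gGTLu r lam T) = T)
    \<and> (\<forall>m\<in>Lu r lam. \<forall>z :: nat \<Rightarrow> 'a::field.
          (\<forall>i. 1 \<le> i \<and> i \<le> r + 1 \<longrightarrow> z i \<noteq> 0) \<longrightarrow>
          wtGT r (lamrho r lam) (fLuGT r lam m) z = wtLu r m z)"
proof -
  let ?mu = "lamrho r lam"
  have gf: "gGTLu r lam (fLuGT r lam m) = m" if "m \<in> Lu r lam" for m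
  proof
    fix p show "gGTLu r lam (fLuGT r lam m) p = m p"
      using that g_f[of "fst p" "snd p" r lam m]
      by (cases "p \<in> PosRoots r"; cases p) (auto simp: gGTLu_def Lu_def NN_def)
  qed
  have fg: "fLuGT r lam (gGTLu r lam T) = T" if "T \<in> GT r ?mu" for T
    using that f_g by (auto simp: GT_def)
  have fin: "fLuGT r lam m \<in> GT r ?mu" if m: "m \<in> Lu r lam" for m
  proof -
    let ?a = "fLuGT r lam m"
    have i1: "\<forall>(i,j)\<in>PosRoots r. ?a(i,j) \<ge> extGT r ?mu ?a (i+1) (j+1)"
    proof (intro ballI, clarify)
      fix i j assume p: "(i,j)\<in>PosRoots r"
      have "s_ij r lam m i j \<ge> -1" using m p by (auto simp: Lu_def)
      then show "?a(i,j) \<ge> extGT r ?mu ?a (i+1) (j+1)" using f_diff[OF p, of lam m] by simp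
    qed
    have i2: "\<forall>(i,j)\<in>PosRoots r. extGT r ?mu ?a i (j+1) \<ge> ?a(i,j)"
    proof (intro ballI, clarify)
      fix i j assume "(i,j)\<in>PosRoots r"
      then have "gGTLu r lam ?a (i,j) = m(i,j)" "m(i,j) \<ge> 0" using g_f m
        by (auto simp: Lu_def NN_def)
      then show "extGT r ?mu ?a i (j+1) \<ge> ?a(i,j)" using \<open>(i,j)\<in>PosRoots r\<close>
        by (simp add: gGTLu_def)
    qed
    have "?a \<in> NN r" using a_nonneg[OF i1 assms(2)]
      by (auto simp: NN_def fLuGT_def)
    then show ?thesis using i1 i2 by (auto simp: GT_def)
  qed
  have gin: "gGTLu r lam T \<in> Lu r lam" if T: "T \<in> GT r ?mu" for T
  proof -
    let ?m = "gGTLu r lam T"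
    have "?m \<in> NN r" using T by (auto simp: NN_def GT_def gGTLu_def)
    moreover have "\<forall>(i,j)\<in>PosRoots r. s_ij r lam ?m i j \<ge> -1"
    proof (intro ballI, clarify)
      fix i j assume p: "(i,j)\<in>PosRoots r"
      have "s_ij r lam ?m i j + 1 = T (i,j) - extGT r ?mu T (i+1) (j+1)"
        using f_diff[OF p, of lam ?m] fg[OF T] by simp
      moreover have "T (i,j) \<ge> extGT r ?mu T (i+1) (j+1)" using T p by (auto simp: GT_def)
      ultimately show "s_ij r lam ?m i j \<ge> -1" by simp
    qed
    ultimately show ?thesis by (simp add: Lu_def)
  qed
  have bij: "bij_betw (fLuGT r lam) (Lu r lam) (GT r ?mu)"
    by (rule bij_betw_byWitness[where f'="gGTLu r lam"]) (use gf fg fin gin in auto)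
  have wt: "wtGT r ?mu (fLuGT r lam m) z = wtLu r m z" if "m \<in> Lu r lam" for m and z :: "nat \<Rightarrow> 'a::field"
    unfolding wtGT_def wtLu_def
  proof (intro prod.cong refl, clarify)
    fix i j assume p: "(i,j)\<in>PosRoots r"
    have "gGTLu r lam (fLuGT r lam m) (i,j) = m(i,j)" using g_f[OF p] .
    then have "extGT r ?mu (fLuGT r lam m) i (j+1) - fLuGT r lam m (i,j) = m(i,j)"
      using p by (simp add: gGTLu_def)
    then show "(z i / z j) powi (extGT r ?mu (fLuGT r lam m) i (j+1) - fLuGT r lam m (i,j)) = (z i / z j) powi m(i,j)"
      by simp
  qed
  show ?thesis using bij gf fg wt by blast
qed

end
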